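(* Let $k$ be sufficiently large and suppose $m/n\geq 195\cdot 2^k\ln^2 k/k$. Then the random formula $\Phi=\Phi_k(n,m)$ is quasirandom with high probability (as $n\to\infty$).
   Context: $\Phi=\Phi_k(n,m)$ is a uniformly random $k$-CNF with $m$ clauses of $k$ literals each over $x_1,\dots,x_n$ (uniform among all $(2n)^{km}$ such formulas). Set $\rho=2^{-k}m/n$, $\kappa=\ln k/k$. For $\sigma\in\{0,1\}^n$, $U_\Phi(\sigma)$ is the set of indices of clauses unsatisfied by $\sigma$, $\mathcal U_\Phi(\sigma)=|U_\Phi(\sigma)|$, and $T(\Phi)=\{\tau:\mathcal U_\Phi(\tau)\le n\rho/10\}$. $\mathrm{dist}$ is Hamming distance, $\Delta(\sigma,\tau)$ the set of variables where $\sigma,\tau$ differ, $\mathcal D_\sigma(r_1,r_2)=\{\tau:\lfloor r_1\kappa n\rfloor\le \mathrm{dist}(\sigma,\tau)\le\lfloor r_2\kappa n\rfloor\}$. For a set of variables $W$, $X_\Phi(W,\sigma)=\sum_{i\in U_\Phi(\sigma)}\sum_{j\in[k]}\mathbf 1\{|\Phi_{ij}|\in W\}$, where $|\Phi_{ij}|$ is the variable of the $j$th literal of clause $i$. A mist of $\Phi$ is a set $\mathcal M\subseteq T(\Phi)$ such that (MI1) distinct elements of $\mathcal M$ have distance at least $2\kappa n$ and (MI2) every $\sigma\in T(\Phi)$ has some $\mu\in\mathcal M$ with $\mathrm{dist}(\mu,\sigma)\le2\kappa n$. $\mathcal D(\Phi,\mathcal M)=\bigcup_{\sigma\in\mathcal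 M}\mathcal D_\sigma(0,10)$. $\Phi$ is quasirandom if there is a mist $\mathcal M$ with: (Q1) $|\mathcal D(\Phi,\mathcal M)|\le 2^n\exp(-2n/k^2)$; (Q2) for all $\tau\in\{0,1\}^n$, $|\mathcal M\cap \mathcal D_\tau(0,10)|\le k$; (Q3) for every $\mu\in\mathcal M$ and $\sigma\in\mathcal D_\mu(0,100)\setminus T(\Phi)$, $X_\Phi(\Delta(\mu,\sigma),\sigma)\le k\,\mathcal U_\Phi(\sigma)/10$. *)

theory Defs
  imports "HOL-Analysis.Analysis"
begin

(* A literal is a pair (variable index in {0..<n}, sign); sign True = positive literal x_v,
   sign False = negated literal. A k-CNF with m clauses over n variables is a function
   Phi mapping (i,j), i<m, j<k, to the j-th literal of clause i (extensional outside). *)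
type_synonym formula = "nat \<times> nat \<Rightarrow> nat \<times> bool"
type_synonym assignment = "nat \<Rightarrow> bool"

definition formulas :: "nat \<Rightarrow> nat \<Rightarrow> nat \<Rightarrow> formula set" where
  "formulas k n m = ({..<m} \<times> {..<k}) \<rightarrow>\<^sub>E ({..<n} \<times> (UNIV :: bool set))"

definition assignments :: "nat \<Rightarrow> assignment set" where
  "assignments n = {..<n} \<rightarrow>\<^sub>E (UNIV :: bool set)"

definition hdist :: "nat \<Rightarrow> assignment \<Rightarrow> assignment \<Rightarrow> nat" where
  "hdist n \<sigma> \<tau> = card {v \<in> {..<n}. \<sigma> v \<noteq> \<tau> v}"

definition Delta :: "nat \<Rightarrow> assignment \<Rightarrow> assignment \<Rightarrow> nat set" where
  "Delta n \<sigma> \<tau> = {v \<in> {..<n}. \<sigma> v \<noteq> \<tau> v}"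

definition rho :: "nat \<Rightarrow> nat \<Rightarrow> nat \<Rightarrow> real" where
  "rho k n m = real m / (2 ^ k * real n)"

definition kappa :: "nat \<Rightarrow> real" where
  "kappa k = ln (real k) / real k"

definition Unsat :: "nat \<Rightarrow> nat \<Rightarrow> formula \<Rightarrow> assignment \<Rightarrow> nat set" where
  "Unsat k m \<Phi> \<sigma> = {i \<in> {..<m}. \<forall>j<k. \<sigma> (fst (\<Phi> (i, j))) \<noteq> snd (\<Phi> (i, j))}"

definition nUnsat :: "nat \<Rightarrow> nat \<Rightarrow> formula \<Rightarrow> assignment \<Rightarrow> nat" where
  "nUnsat k m \<Phi> \<sigma> = card (Unsat k m \<Phi> \<sigma>)"

definition Tset :: "nat \<Rightarrow> nat \<Rightarrow> nat \<Rightarrow> formula \<Rightarrow> assignment set" where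
  "Tset k n m \<Phi> = {\<tau> \<in> assignments n. real (nUnsat k m \<Phi> \<tau>) \<le> real n * rho k n m / 10}"

definition Dball :: "nat \<Rightarrow> nat \<Rightarrow> assignment \<Rightarrow> real \<Rightarrow> real \<Rightarrow> assignment set" where
  "Dball k n \<sigma> r1 r2 = {\<tau> \<in> assignments n.
      \<lfloor>r1 * kappa k * real n\<rfloor> \<le> int (hdist n \<sigma> \<tau>) \<and> int (hdist n \<sigma> \<tau>) \<le> \<lfloor>r2 * kappa k * real n\<rfloor>}"

definition Xcount :: "nat \<Rightarrow> nat \<Rightarrow> formula \<Rightarrow> nat set \<Rightarrow> assignment \<Rightarrow> nat" where
  "Xcount k m \<Phi> W \<sigma> = (\<Sum>i\<in>Unsat k m \<Phi> \<sigma>. card {j \<in> {..<k}. fst (\<Phi> (i, j)) \<in> W})"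

definition is_mist :: "nat \<Rightarrow> nat \<Rightarrow> nat \<Rightarrow> formula \<Rightarrow> assignment set \<Rightarrow> bool" where
  "is_mist k n m \<Phi> M \<longleftrightarrow> M \<subseteq> Tset k n m \<Phi> \<and>
     (\<forall>\<mu>\<in>M. \<forall>\<nu>\<in>M. \<mu> \<noteq> \<nu> \<longrightarrow> real (hdist n \<mu> \<nu>) \<ge> 2 * kappa k * real n) \<and>
     (\<forall>\<sigma>\<in>Tset k n m \<Phi>. \<exists>\<mu>\<in>M. real (hdist n \<mu> \<sigma>) \<le> 2 * kappa k * real n)"

definition Dmist :: "nat \<Rightarrow> nat \<Rightarrow> assignment set \<Rightarrow> assignment set" where
  "Dmist k n M = (\<Union>\<sigma>\<in>M. Dball k n \<sigma> 0 10)"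

definition quasirandom :: "nat \<Rightarrow> nat \<Rightarrow> nat \<Rightarrow> formula \<Rightarrow> bool" where
  "quasirandom k n m \<Phi> \<longleftrightarrow> (\<exists>M. is_mist k n m \<Phi> M \<and>
     real (card (Dmist k n M)) \<le> 2 ^ n * exp (- 2 * real n / (real k)\<^sup>2) \<and>
     (\<forall>\<tau>\<in>assignments n. card (M \<inter> Dball k n \<tau> 0 10) \<le> k) \<and>
     (\<forall>\<mu>\<in>M. \<forall>\<sigma>\<in>Dball k n \<mu> 0 100 - Tset k n m \<Phi>.
        real (Xcount k m \<Phi> (Delta n \<mu> \<sigma>) \<sigma>) \<le> real k * real (nUnsat k m \<Phi> \<sigma>) / 10))"

definition prob_quasirandom :: "nat \<Rightarrow> nat \<Rightarrow> nat \<Rightarrow> real" where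
  "prob_quasirandom k n m =
     real (card {\<Phi> \<in> formulas k n m. quasirandom k n m \<Phi>}) / real (card (formulas k n m))"

end

theory Submission
  imports Defs "HOL-Real_Asymp.Real_Asymp"
begin

definition lits :: "nat \<Rightarrow> (nat \<times> bool) set" where "lits n = {..<n} \<times> UNIV"
definition clauses :: "nat \<Rightarrow> nat \<Rightarrow> (nat \<Rightarrow> nat \<times> bool) set" where
  "clauses k n = {..<k} \<rightarrow>\<^sub>E lits n"
definition cl :: "nat \<Rightarrow> formula \<Rightarrow> nat \<Rightarrow> nat \<Rightarrow> nat \<times> bool" where
  "cl k \<Phi> i = (\<lambda>j\<in>{..<k}. \<Phi> (i, j))"

lemma finite_lits[simp]: "finite (lits n)" by (simp add: lits_def)
lemma card_lits[simp]: "card (lits n) = 2 * n" by (simp add: lits_def card_cartesian_product)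
lemma finite_clauses[simp]: "finite (clauses k n)" by (simp add: clauses_def finite_PiE)
lemma card_clauses: "card (clauses k n) = (2*n)^k" by (simp add: clauses_def card_PiE)
lemma finite_formulas[simp]: "finite (formulas k n m)"
  by (simp add: formulas_def finite_PiE)
lemma finite_assignments[simp]: "finite (assignments n)"
  by (simp add: assignments_def finite_PiE)
lemma card_assignments: "card (assignments n) = 2^n"
  by (simp add: assignments_def card_PiE)

lemma sum_clauses_prod:
  fixes \<phi> :: "nat \<times> bool \<Rightarrow> 'c::comm_semiring_1"
  shows "(\<Sum>c\<in>clauses k n. \<Prod>j<k. \<phi> (c j)) = (\<Sum>l\<in>lits n. \<phi> l)^k"
  using prod_sum_PiE[of "{..<k}" "\<lambda>_. lits n" "\<lambda>_ l. \<phi> l"]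
  by (simp add: clauses_def)

lemma bij_formulas:
  "bij_betw (\<lambda>\<Phi>. \<lambda>i\<in>{..<m}. cl k \<Phi> i) (formulas k n m) ({..<m} \<rightarrow>\<^sub>E clauses k n)"
proof (rule bij_betw_byWitness[where f' = "\<lambda>\<Psi> p. if p \<in> {..<m} \<times> {..<k} then \<Psi> (fst p) (snd p) else undefined"])
  show "\<forall>a\<in>formulas k n m. (\<lambda>p. if p \<in> {..<m} \<times> {..<k} then (\<lambda>i\<in>{..<m}. cl k a i) (fst p) (snd p) else undefined) = a"
    by (auto simp: formulas_def cl_def PiE_def extensional_def fun_eq_iff)
  show "\<forall>a'\<in>{..<m} \<rightarrow>\<^sub>E clauses k n. (\<lambda>i\<in>{..<m}. cl k (\<lambda>p. if p \<in> {..<m} \<times> {..<k} then a' (fst p) (snd p) else undefined) i) = a'"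
  proof
    fix a' assume a': "a' \<in> {..<m} \<rightarrow>\<^sub>E clauses k n"
    show "(\<lambda>i\<in>{..<m}. cl k (\<lambda>p. if p \<in> {..<m} \<times> {..<k} then a' (fst p) (snd p) else undefined) i) = a'"
    proof (rule ext)
      fix i
      show "(\<lambda>i\<in>{..<m}. cl k (\<lambda>p. if p \<in> {..<m} \<times> {..<k} then a' (fst p) (snd p) else undefined) i) i = a' i"
      proof (cases "i < m")
        case True
        then have "a' i \<in> clauses k n" using a' by auto
        then have "a' i \<in> extensional {..<k}" by (simp add: clauses_def PiE_def)
        then show ?thesis using True by (auto simp: cl_def fun_eq_iff extensional_def)
      next
        case False
        then show ?thesis using a' by (auto simp: PiE_def extensional_def)
      qed
    qed
  qed
  show "(\<lambda>\<Phi>. \<lambda>i\<in>{..<m}. cl k \<Phi> i) ` formulas k n m \<subseteq> {..<m} \<rightarrow>\<^sub>E clauses k n"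
    by (auto simp: formulas_def clauses_def cl_def lits_def PiE_def Pi_def)
  show "(\<lambda>\<Psi> p. if p \<in> {..<m} \<times> {..<k} then \<Psi> (fst p) (snd p) else undefined) ` ({..<m} \<rightarrow>\<^sub>E clauses k n) \<subseteq> formulas k n m"
    by (auto simp: formulas_def clauses_def lits_def PiE_def Pi_def extensional_def)
qed

lemma sum_formulas_prod:
  fixes g :: "(nat \<Rightarrow> nat \<times> bool) \<Rightarrow> 'c::comm_semiring_1"
  shows "(\<Sum>\<Phi>\<in>formulas k n m. \<Prod>i<m. g (cl k \<Phi> i)) = (\<Sum>c\<in>clauses k n. g c)^m"
proof -
  have "(\<Sum>c\<in>clauses k n. g c)^m = (\<Prod>i<m. \<Sum>c\<in>clauses k n. g c)" by simp
  also have "\<dots> = (\<Sum>\<Psi>\<in>{..<m} \<rightarrow>\<^sub>E clauses k n. \<Prod>i<m. g (\<Psi> i))"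
    by (rule prod_sum_PiE) auto
  also have "\<dots> = (\<Sum>\<Phi>\<in>formulas k n m. \<Prod>i<m. g ((\<lambda>i\<in>{..<m}. cl k \<Phi> i) i))"
    using sum.reindex_bij_betw[OF bij_formulas[where m=m and k=k and n=n], of "\<lambda>\<Psi>. \<Prod>i<m. g (\<Psi> i)"] by simp
  also have "\<dots> = (\<Sum>\<Phi>\<in>formulas k n m. \<Prod>i<m. g (cl k \<Phi> i))"
    by simp
  finally show ?thesis by simp
qed

lemma card_formulas: "card (formulas k n m) = (2*n)^(k*m)"
  by (simp add: formulas_def card_PiE card_cartesian_product)
     (metis mult.commute power_mult power_mult_distrib)



definition fl :: "assignment \<Rightarrow> nat \<times> bool \<Rightarrow> bool" where "fl \<sigma> l = (\<sigma> (fst l) \<noteq> snd l)"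
definition uu :: "nat \<Rightarrow> assignment \<Rightarrow> (nat \<Rightarrow> nat \<times> bool) \<Rightarrow> real" where
  "uu k \<sigma> c = (if \<forall>j<k. fl \<sigma> (c j) then 1 else 0)"
definition ww :: "nat set \<Rightarrow> nat \<Rightarrow> (nat \<Rightarrow> nat \<times> bool) \<Rightarrow> nat" where
  "ww W k c = card {j\<in>{..<k}. fst (c j) \<in> W}"

lemma uu_01: "uu k \<sigma> c = 0 \<or> uu k \<sigma> c = 1" by (simp add: uu_def)

lemma uu_prod: "uu k \<sigma> c = (\<Prod>j<k. if fl \<sigma> (c j) then 1 else 0)"
proof (cases "\<forall>j<k. fl \<sigma> (c j)")
  case True then show ?thesis by (simp add: uu_def)
next
  case False
  then obtain j where "j < k" "\<not> fl \<sigma> (c j)" by auto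
  then show ?thesis using False by (auto simp: uu_def intro!: prod_zero bexI[of _ j])
qed

lemma card_filter_sum: "finite A \<Longrightarrow> real (card {x\<in>A. P x}) = (\<Sum>x\<in>A. if P x then 1 else 0)"
  using sum.inter_filter[of A "\<lambda>_. 1::real" P] by simp

lemma nUnsat_sum: "real (nUnsat k m \<Phi> \<sigma>) = (\<Sum>i<m. uu k \<sigma> (cl k \<Phi> i))"
proof -
  have "Unsat k m \<Phi> \<sigma> = {i\<in>{..<m}. \<forall>j<k. fl \<sigma> (cl k \<Phi> i j)}"
    by (auto simp: Unsat_def fl_def cl_def)
  then show ?thesis unfolding nUnsat_def
    by (simp only: card_filter_sum[OF finite_lessThan]) (simp add: uu_def)
qed

lemma Xcount_sum: "real (Xcount k m \<Phi> W \<sigma>) = (\<Sum>i<m. uu k \<sigma> (cl k \<Phi> i) * real (ww W k (cl k \<Phi> i)))"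
proof -
  have U: "Unsat k m \<Phi> \<sigma> = {i\<in>{..<m}. \<forall>j<k. fl \<sigma> (cl k \<Phi> i j)}"
    by (auto simp: Unsat_def fl_def cl_def)
  have w: "\<And>i. card {j \<in> {..<k}. fst (\<Phi> (i, j)) \<in> W} = ww W k (cl k \<Phi> i)"
    unfolding ww_def cl_def by (rule arg_cong[where f=card]) auto
  have "real (Xcount k m \<Phi> W \<sigma>) = (\<Sum>i\<in>{i\<in>{..<m}. \<forall>j<k. fl \<sigma> (cl k \<Phi> i j)}. real (ww W k (cl k \<Phi> i)))"
    unfolding Xcount_def U w of_nat_sum by (rule refl)
  also have "\<dots> = (\<Sum>i<m. uu k \<sigma> (cl k \<Phi> i) * real (ww W k (cl k \<Phi> i)))"
    by (subst sum.inter_filter) (auto simp: uu_def intro!: sum.cong)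
  finally show ?thesis .
qed

lemma sum_lits: "(\<Sum>l\<in>lits n. f l) = (\<Sum>v<n. f (v, True) + f (v, False))"
proof -
  have "f = (\<lambda>(x,y). f (x,y))" by auto
  then have "(\<Sum>l\<in>lits n. f l) = (\<Sum>(x,y)\<in>{..<n} \<times> UNIV. f (x,y))" by (simp add: lits_def)
  also have "\<dots> = (\<Sum>x<n. \<Sum>y\<in>UNIV. f (x,y))" by (simp add: sum.cartesian_product)
  finally show ?thesis by (simp add: UNIV_bool add.commute)
qed

lemma sum_clauses_uu: "(\<Sum>c\<in>clauses k n. uu k \<sigma> c) = real n ^ k"
proof -
  have "(\<Sum>c\<in>clauses k n. uu k \<sigma> c) = (\<Sum>l\<in>lits n. (if fl \<sigma> l then 1 else 0::real))^k"
    unfolding uu_prod by (rule sum_clauses_prod)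
  also have "(\<Sum>l\<in>lits n. (if fl \<sigma> l then 1 else 0::real)) = (\<Sum>v<n. 1)"
    unfolding sum_lits by (intro sum.cong) (auto simp: fl_def)
  also have "(\<Sum>v<n. 1::real) = real n" by simp
  finally show ?thesis .
qed

lemma sum_clauses_uu2:
  assumes "\<sigma> \<in> assignments n" "\<sigma>' \<in> assignments n"
  shows "(\<Sum>c\<in>clauses k n. uu k \<sigma> c * uu k \<sigma>' c) = (real n - real (hdist n \<sigma> \<sigma>')) ^ k"
proof -
  have "(\<Sum>c\<in>clauses k n. uu k \<sigma> c * uu k \<sigma>' c) =
     (\<Sum>c\<in>clauses k n. \<Prod>j<k. (if fl \<sigma> (c j) \<and> fl \<sigma>' (c j) then 1 else 0::real))"
    unfolding uu_prod prod.distrib[symmetric] by (intro sum.cong prod.cong) auto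
  also have "\<dots> = (\<Sum>l\<in>lits n. (if fl \<sigma> l \<and> fl \<sigma>' l then 1 else 0::real))^k"
    by (rule sum_clauses_prod)
  also have "(\<Sum>l\<in>lits n. (if fl \<sigma> l \<and> fl \<sigma>' l then 1 else 0::real)) = (\<Sum>v<n. if \<sigma> v = \<sigma>' v then 1 else 0)"
    unfolding sum_lits by (intro sum.cong) (auto simp: fl_def)
  also have "\<dots> = real (card {v\<in>{..<n}. \<sigma> v = \<sigma>' v})"
    by (simp add: sum.inter_filter[symmetric])
  also have "card {v\<in>{..<n}. \<sigma> v = \<sigma>' v} = n - hdist n \<sigma> \<sigma>'"
  proof -
    have "{v\<in>{..<n}. \<sigma> v = \<sigma>' v} = {..<n} - {v\<in>{..<n}. \<sigma> v \<noteq> \<sigma>' v}" by auto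
    then show ?thesis unfolding hdist_def
      using card_Diff_subset[of "{v \<in> {..<n}. \<sigma> v \<noteq> \<sigma>' v}" "{..<n}"] by auto
  qed
  also have "real (n - hdist n \<sigma> \<sigma>') = real n - real (hdist n \<sigma> \<sigma>')"
  proof -
    have "hdist n \<sigma> \<sigma>' \<le> n" unfolding hdist_def
      using card_mono[of "{..<n}" "{v\<in>{..<n}. \<sigma> v \<noteq> \<sigma>' v}"] by auto
    then show ?thesis by simp
  qed
  finally show ?thesis .
qed

lemma uu_exp_ww: "uu k \<sigma> c * exp (real (ww W k c)) =
  (\<Prod>j<k. if fl \<sigma> (c j) then exp (if fst (c j) \<in> W then 1 else 0) else 0)"
proof -
  have "real (ww W k c) = (\<Sum>j<k. if fst (c j) \<in> W then 1 else 0)"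
    by (simp add: ww_def sum.inter_filter[symmetric])
  then have "exp (real (ww W k c)) = (\<Prod>j<k. exp (if fst (c j) \<in> W then 1 else 0))"
    by (simp add: exp_sum)
  then have "uu k \<sigma> c * exp (real (ww W k c)) = (\<Prod>j<k. (if fl \<sigma> (c j) then 1 else 0) * exp (if fst (c j) \<in> W then 1 else 0))"
    unfolding uu_prod by (simp add: prod.distrib)
  then show ?thesis by (auto intro!: prod.cong)
qed

lemma sum_clauses_uu_exp:
  assumes "W \<subseteq> {..<n}"
  shows "(\<Sum>c\<in>clauses k n. uu k \<sigma> c * exp (real (ww W k c))) = (real n + real (card W) * (exp 1 - 1)) ^ k"
proof -
  have "(\<Sum>c\<in>clauses k n. uu k \<sigma> c * exp (real (ww W k c))) =
     (\<Sum>l\<in>lits n. if fl \<sigma> l then exp (if fst l \<in> W then 1 else 0) else 0)^k"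
    unfolding uu_exp_ww by (rule sum_clauses_prod)
  also have "(\<Sum>l\<in>lits n. if fl \<sigma> l then exp (if fst l \<in> W then 1 else 0) else 0) =
      (\<Sum>v<n. exp (if v \<in> W then 1 else 0))"
    unfolding sum_lits by (intro sum.cong) (auto simp: fl_def)
  also have "\<dots> = (\<Sum>v<n. 1 + (if v \<in> W then exp 1 - 1 else 0))"
    by (intro sum.cong) auto
  also have "\<dots> = real n + real (card W) * (exp 1 - 1)"
    using assms by (simp add: sum.distrib sum.If_cases Int_absorb1 Int_absorb2)
  finally show ?thesis .
qed



lemma exp_neg_le2:
  fixes x :: real assumes "0 \<le> x"
  shows "exp (-x) \<le> 1 - x + x^2/2"
proof -
  let ?g = "\<lambda>y::real. exp (-y) - (1 - y + y^2/2)"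
  have "?g x \<le> ?g 0"
  proof (rule deriv_nonpos_imp_antimono[where g = ?g and a = 0 and b = x and g' = "\<lambda>y. - exp (-y) + 1 - y"])
    fix y assume "y \<in> {0..x}"
    show "(?g has_real_derivative (- exp (-y) + 1 - y)) (at y)"
      by (auto intro!: derivative_eq_intros simp: power2_eq_square algebra_simps)
    have "1 - y \<le> exp (-y)" using exp_ge_add_one_self[of "-y"] by simp
    then show "- exp (-y) + 1 - y \<le> 0" by simp
  qed (use assms in auto)
  then show ?thesis by simp
qed

lemma count_bound:
  fixes g :: "(nat \<Rightarrow> nat \<times> bool) \<Rightarrow> real"
  assumes E: "E \<subseteq> formulas k n m"
    and P: "\<And>\<Phi>. \<Phi> \<in> E \<Longrightarrow> 1 \<le> K * (\<Prod>i<m. g (cl k \<Phi> i))"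
    and g: "\<And>c. 0 \<le> g c" and K: "0 \<le> K"
  shows "real (card E) \<le> K * (\<Sum>c\<in>clauses k n. g c)^m"
proof -
  have fE: "finite E" using finite_subset[OF E finite_formulas] .
  have "real (card E) = (\<Sum>\<Phi>\<in>E. 1)" by simp
  also have "\<dots> \<le> (\<Sum>\<Phi>\<in>E. K * (\<Prod>i<m. g (cl k \<Phi> i)))"
    by (rule sum_mono) (rule P)
  also have "\<dots> \<le> (\<Sum>\<Phi>\<in>formulas k n m. K * (\<Prod>i<m. g (cl k \<Phi> i)))"
    by (rule sum_mono2) (use E g K in \<open>auto intro!: mult_nonneg_nonneg prod_nonneg\<close>)
  also have "\<dots> = K * (\<Sum>c\<in>clauses k n. g c)^m"
    by (simp add: sum_distrib_left[symmetric] sum_formulas_prod)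
  finally show ?thesis .
qed

lemma rho_eq: "n > 0 \<Longrightarrow> real n * rho k n m = real m / 2^k"
  by (simp add: rho_def)

lemma sep_bound:
  assumes k: "k \<ge> 1" and kap: "2 * kappa k \<le> 1"
    and d: "2 * kappa k * real n \<le> real d" "d \<le> n"
  shows "(real n - real d) ^ k \<le> real n ^ k / real k ^ 2"
proof -
  have 1: "(real n - real d) ^ k \<le> (real n * (1 - 2 * kappa k)) ^ k"
    by (rule power_mono) (use d in \<open>auto simp: algebra_simps\<close>)
  have 2: "(1 - 2 * kappa k) ^ k \<le> exp (- 2 * kappa k) ^ k"
    by (rule power_mono) (use kap exp_ge_add_one_self[of "- 2 * kappa k"] in auto)
  have 3: "exp (- 2 * kappa k) ^ k = exp (- 2 * ln (real k))"
  proof -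
    have "exp (- 2 * kappa k) ^ k = exp (real k * (- 2 * kappa k))"
      by (rule exp_of_nat_mult[symmetric])
    also have "real k * (- 2 * kappa k) = - 2 * ln (real k)"
      using k by (simp add: kappa_def)
    finally show ?thesis .
  qed
  have 4: "exp (- 2 * ln (real k)) = 1 / real k ^ 2"
  proof -
    have "exp (2 * ln (real k)) = real k ^ 2"
      using k by (simp only: mult_2 exp_add) (simp add: power2_eq_square)
    then show ?thesis by (simp add: exp_minus divide_inverse)
  qed
  have "(real n * (1 - 2 * kappa k)) ^ k = real n ^ k * (1 - 2 * kappa k) ^ k"
    by (simp add: power_mult_distrib)
  also have "\<dots> \<le> real n ^ k * (1 / real k ^ 2)"
    using 2 3 4 by (intro mult_left_mono) auto
  finally show ?thesis using 1 by simp
qed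



lemma U_le_of_T:
  assumes "n > 0" "\<sigma> \<in> Tset k n m \<Phi>"
  shows "real (nUnsat k m \<Phi> \<sigma>) \<le> real m / 2^k / 10"
  using assms by (simp add: Tset_def rho_eq)

lemma sum_N2_bound:
  assumes n: "n > 0" and k: "k \<ge> 1" and kap: "2 * kappa k \<le> 1"
    and fS: "finite S" and S: "S \<subseteq> assignments n" and cS: "card S \<le> k + 1"
    and sep: "\<And>\<sigma> \<sigma>'. \<sigma> \<in> S \<Longrightarrow> \<sigma>' \<in> S \<Longrightarrow> \<sigma> \<noteq> \<sigma>' \<Longrightarrow> 2 * kappa k * real n \<le> real (hdist n \<sigma> \<sigma>')"
    and \<sigma>: "\<sigma> \<in> S"
  shows "(\<Sum>\<sigma>'\<in>S. \<Sum>c\<in>clauses k n. uu k \<sigma> c * uu k \<sigma>' c) \<le> 2 * real n ^ k"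
proof -
  have hd: "hdist n \<sigma> \<sigma>' \<le> n" for \<sigma>'
    unfolding hdist_def using card_mono[of "{..<n}" "{v\<in>{..<n}. \<sigma> v \<noteq> \<sigma>' v}"] by auto
  have self: "(\<Sum>c\<in>clauses k n. uu k \<sigma> c * uu k \<sigma> c) = real n ^ k"
  proof -
    have "uu k \<sigma> c * uu k \<sigma> c = uu k \<sigma> c" for c using uu_01[of k \<sigma> c] by auto
    then have "(\<Sum>c\<in>clauses k n. uu k \<sigma> c * uu k \<sigma> c) = (\<Sum>c\<in>clauses k n. uu k \<sigma> c)"
      by (intro sum.cong) auto
    then show ?thesis by (simp only: sum_clauses_uu)
  qed
  have other: "(\<Sum>c\<in>clauses k n. uu k \<sigma> c * uu k \<sigma>' c) \<le> real n ^ k / real k ^ 2"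
    if "\<sigma>' \<in> S - {\<sigma>}" for \<sigma>'
  proof -
    have "(\<Sum>c\<in>clauses k n. uu k \<sigma> c * uu k \<sigma>' c) = (real n - real (hdist n \<sigma> \<sigma>')) ^ k"
      using S \<sigma> that by (intro sum_clauses_uu2) auto
    also have "\<dots> \<le> real n ^ k / real k ^ 2"
      by (rule sep_bound[OF k kap]) (use sep \<sigma> that hd in auto)
    finally show ?thesis .
  qed
  have "(\<Sum>\<sigma>'\<in>S. \<Sum>c\<in>clauses k n. uu k \<sigma> c * uu k \<sigma>' c) =
     (\<Sum>c\<in>clauses k n. uu k \<sigma> c * uu k \<sigma> c) + (\<Sum>\<sigma>'\<in>S - {\<sigma>}. \<Sum>c\<in>clauses k n. uu k \<sigma> c * uu k \<sigma>' c)"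
    using fS \<sigma> by (simp add: sum.remove)
  also have "\<dots> \<le> real n ^ k + (\<Sum>\<sigma>'\<in>S - {\<sigma>}. real n ^ k / real k ^ 2)"
    using self other by (intro add_mono sum_mono) auto
  also have "\<dots> = real n ^ k + real (card S - 1) * (real n ^ k / real k ^ 2)"
    using fS \<sigma> by simp
  also have "\<dots> \<le> real n ^ k + real k * (real n ^ k / real k ^ 2)"
    using cS by (intro add_left_mono mult_right_mono) auto
  also have "real k * (real n ^ k / real k ^ 2) \<le> real n ^ k"
  proof -
    have "real n ^ k * 1 \<le> real n ^ k * real k" using k by (intro mult_left_mono) auto
    then show ?thesis using k by (simp add: power2_eq_square field_simps)
  qed
  finally show ?thesis by simp
qed



lemma eventT:
  fixes S :: "assignment set"
  assumes n: "n > 0" and k: "k \<ge> 1" and kap: "2 * kappa k \<le> 1"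
    and fS: "finite S" and S: "S \<subseteq> assignments n" and cS: "card S \<le> k + 1"
    and sep: "\<And>\<sigma> \<sigma>'. \<sigma> \<in> S \<Longrightarrow> \<sigma>' \<in> S \<Longrightarrow> \<sigma> \<noteq> \<sigma>' \<Longrightarrow> 2 * kappa k * real n \<le> real (hdist n \<sigma> \<sigma>')"
  shows "real (card {\<Phi>\<in>formulas k n m. S \<subseteq> Tset k n m \<Phi>})
          \<le> real (2*n)^(k*m) * exp (- real (card S) * (real m / 2^k) / 5)"
proof -
  define s where "s = real (card S)"
  define A where "A = real m / 2^k"
  define N where "N = (\<lambda>c. \<Sum>\<sigma>\<in>S. uu k \<sigma> c)"
  define g where "g = (\<lambda>c. exp (- N c / 2))"
  have "real (card {\<Phi>\<in>formulas k n m. S \<subseteq> Tset k n m \<Phi>}) \<le> exp (s * A / 20) * (\<Sum>c\<in>clauses k n. g c)^m"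
  proof (rule count_bound)
    fix \<Phi> assume "\<Phi> \<in> {\<Phi>\<in>formulas k n m. S \<subseteq> Tset k n m \<Phi>}"
    then have T: "S \<subseteq> Tset k n m \<Phi>" by auto
    have "(\<Prod>i<m. g (cl k \<Phi> i)) = exp (\<Sum>i<m. - N (cl k \<Phi> i) / 2)"
      by (simp add: g_def exp_sum)
    also have "(\<Sum>i<m. - N (cl k \<Phi> i) / 2) = - (\<Sum>\<sigma>\<in>S. real (nUnsat k m \<Phi> \<sigma>)) / 2"
      by (simp add: N_def nUnsat_sum sum.swap[of _ "{..<m}"] sum_divide_distrib sum_negf)
    finally have eq: "(\<Prod>i<m. g (cl k \<Phi> i)) = exp (- (\<Sum>\<sigma>\<in>S. real (nUnsat k m \<Phi> \<sigma>)) / 2)" .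
    have "(\<Sum>\<sigma>\<in>S. real (nUnsat k m \<Phi> \<sigma>)) \<le> (\<Sum>\<sigma>\<in>S. A / 10)"
      by (rule sum_mono) (use T U_le_of_T[OF n] in \<open>auto simp: A_def\<close>)
    also have "\<dots> = s * A / 10" by (simp add: s_def)
    finally have "exp (s * A / 20) * exp (- (\<Sum>\<sigma>\<in>S. real (nUnsat k m \<Phi> \<sigma>)) / 2) \<ge> 1"
      by (simp add: exp_add[symmetric])
    then show "1 \<le> exp (s * A / 20) * (\<Prod>i<m. g (cl k \<Phi> i))" by (simp add: eq)
  qed (auto simp: g_def)
  also have "(\<Sum>c\<in>clauses k n. g c) \<le> real (2*n)^k * exp (- s / (4 * 2^k))"
  proof -
    have "(\<Sum>c\<in>clauses k n. g c) \<le> (\<Sum>c\<in>clauses k n. 1 - N c / 2 + N c ^ 2 / 8)"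
    proof (rule sum_mono)
      fix c
      have "0 \<le> N c" by (simp add: N_def sum_nonneg uu_def)
      then have "exp (- (N c / 2)) \<le> 1 - N c / 2 + (N c / 2)^2/2" by (rule exp_neg_le2[of "N c / 2", simplified])
      then show "g c \<le> 1 - N c / 2 + N c ^ 2 / 8" by (simp add: g_def power_divide)
    qed
    also have "\<dots> = real (card (clauses k n)) - (\<Sum>c\<in>clauses k n. N c) / 2 + (\<Sum>c\<in>clauses k n. N c ^ 2) / 8"
      by (simp add: sum.distrib sum_subtractf sum_divide_distrib)
    also have "(\<Sum>c\<in>clauses k n. N c) = s * real n ^ k"
      unfolding N_def by (subst sum.swap) (simp add: sum_clauses_uu s_def)
    also have "(\<Sum>c\<in>clauses k n. N c ^ 2) \<le> s * (2 * real n ^ k)"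
    proof -
      have "(\<Sum>c\<in>clauses k n. N c ^ 2) = (\<Sum>\<sigma>\<in>S. \<Sum>\<sigma>'\<in>S. \<Sum>c\<in>clauses k n. uu k \<sigma> c * uu k \<sigma>' c)"
        by (simp add: N_def power2_eq_square sum_product sum.swap[of _ "clauses k n"])
      also have "\<dots> \<le> (\<Sum>\<sigma>\<in>S. 2 * real n ^ k)"
        by (rule sum_mono) (rule sum_N2_bound[OF n k kap fS S cS sep])
      also have "\<dots> = s * (2 * real n ^ k)" by (simp add: s_def)
      finally show ?thesis .
    qed
    also have "real (card (clauses k n)) = real (2*n)^k" by (simp add: card_clauses)
    finally have 1: "(\<Sum>c\<in>clauses k n. g c) \<le> real (2*n)^k - s * real n ^ k / 2 + s * (2 * real n ^ k) / 8"
      by simp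
    have nk: "real n ^ k = real (2*n)^k / 2^k" by (simp add: power_mult_distrib)
    have "real (2*n)^k - s * real n ^ k / 2 + s * (2 * real n ^ k) / 8 = real (2*n)^k * (1 - s / (4 * 2^k))"
      unfolding nk by (simp add: field_simps)
    also have "\<dots> \<le> real (2*n)^k * exp (- s / (4 * 2^k))"
      using exp_ge_add_one_self[of "- s / (4 * 2^k)"] by (intro mult_left_mono) auto
    finally show ?thesis using 1 by linarith
  qed
  then have "exp (s * A / 20) * (\<Sum>c\<in>clauses k n. g c)^m \<le> exp (s * A / 20) * (real (2*n)^k * exp (- s / (4 * 2^k)))^m"
    by (intro mult_left_mono power_mono) (auto simp: g_def intro: sum_nonneg)
  also have "\<dots> = real (2*n)^(k*m) * (exp (s * A / 20) * exp (- s / (4 * 2^k)) ^ m)"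
    by (simp add: power_mult_distrib power_mult)
  also have "exp (s * A / 20) * exp (- s / (4 * 2^k)) ^ m = exp (- s * A / 5)"
    by (simp add: exp_of_nat_mult[symmetric] exp_add[symmetric] A_def field_simps)
  finally show ?thesis by (simp add: s_def A_def)
qed



lemma uu_g_eq: "1 - uu k \<sigma> c + uu k \<sigma> c * exp (z) * exp (real (ww W k c)) = exp (uu k \<sigma> c * (real (ww W k c) + z))"
  using uu_01[of k \<sigma> c] by (auto simp: exp_add[symmetric] add.commute)

lemma event3:
  assumes n: "n > 0" and k: "k \<ge> 1" and W: "W \<subseteq> {..<n}"
    and cW: "real (card W) \<le> 100 * kappa k * real n"
    and cond: "exp (- real k / 20) * real k ^ 200 \<le> 1/2"
  shows "real (card {\<Phi>\<in>formulas k n m. real m / 2^k / 10 < real (nUnsat k m \<Phi> \<sigma>) \<and>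
             real k * real (nUnsat k m \<Phi> \<sigma>) / 10 < real (Xcount k m \<Phi> W \<sigma>)})
          \<le> real (2*n)^(k*m) * exp (- real k * (real m / 2^k) / 200)"
proof -
  define A where "A = real m / 2^k"
  define \<theta> where "\<theta> = real k / 20"
  define g where "g = (\<lambda>c. 1 - uu k \<sigma> c + uu k \<sigma> c * exp (\<theta> - real k / 10) * exp (real (ww W k c)))"
  have gexp: "g c = exp (uu k \<sigma> c * (real (ww W k c) + (\<theta> - real k / 10)))" for c
    unfolding g_def by (rule uu_g_eq)
  have "real (card {\<Phi>\<in>formulas k n m. real m / 2^k / 10 < real (nUnsat k m \<Phi> \<sigma>) \<and>
             real k * real (nUnsat k m \<Phi> \<sigma>) / 10 < real (Xcount k m \<Phi> W \<sigma>)})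
        \<le> exp (- \<theta> * A / 10) * (\<Sum>c\<in>clauses k n. g c)^m"
  proof (rule count_bound)
    fix \<Phi> assume "\<Phi> \<in> {\<Phi>\<in>formulas k n m. real m / 2^k / 10 < real (nUnsat k m \<Phi> \<sigma>) \<and>
             real k * real (nUnsat k m \<Phi> \<sigma>) / 10 < real (Xcount k m \<Phi> W \<sigma>)}"
    then have e1: "A / 10 < real (nUnsat k m \<Phi> \<sigma>)"
      and e2: "real k * real (nUnsat k m \<Phi> \<sigma>) / 10 < real (Xcount k m \<Phi> W \<sigma>)"
      by (auto simp: A_def)
    have "(\<Prod>i<m. g (cl k \<Phi> i)) = exp (\<Sum>i<m. uu k \<sigma> (cl k \<Phi> i) * (real (ww W k (cl k \<Phi> i)) + (\<theta> - real k / 10)))"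
      by (simp add: gexp exp_sum)
    also have "(\<Sum>i<m. uu k \<sigma> (cl k \<Phi> i) * (real (ww W k (cl k \<Phi> i)) + (\<theta> - real k / 10)))
       = real (Xcount k m \<Phi> W \<sigma>) + (\<theta> - real k / 10) * real (nUnsat k m \<Phi> \<sigma>)"
    proof -
      have "(\<Sum>i<m. uu k \<sigma> (cl k \<Phi> i) * (real (ww W k (cl k \<Phi> i)) + (\<theta> - real k / 10)))
          = (\<Sum>i<m. uu k \<sigma> (cl k \<Phi> i) * real (ww W k (cl k \<Phi> i)) + (\<theta> - real k / 10) * uu k \<sigma> (cl k \<Phi> i))"
        by (intro sum.cong) (auto simp: algebra_simps)
      also have "\<dots> = (\<Sum>i<m. uu k \<sigma> (cl k \<Phi> i) * real (ww W k (cl k \<Phi> i))) + (\<theta> - real k / 10) * (\<Sum>i<m. uu k \<sigma> (cl k \<Phi> i))"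
        by (simp add: sum.distrib sum_distrib_left)
      finally show ?thesis by (simp only: Xcount_sum nUnsat_sum)
    qed
    finally have eq: "(\<Prod>i<m. g (cl k \<Phi> i)) = exp (real (Xcount k m \<Phi> W \<sigma>) + (\<theta> - real k / 10) * real (nUnsat k m \<Phi> \<sigma>))" .
    have "\<theta> * (A / 10) \<le> \<theta> * real (nUnsat k m \<Phi> \<sigma>)"
      using e1 by (intro mult_left_mono) (auto simp: \<theta>_def)
    then have "\<theta> * A / 10 \<le> real (Xcount k m \<Phi> W \<sigma>) + (\<theta> - real k / 10) * real (nUnsat k m \<Phi> \<sigma>)"
      using e2 by (simp add: algebra_simps)
    then have "1 \<le> exp (- \<theta> * A / 10) * exp (real (Xcount k m \<Phi> W \<sigma>) + (\<theta> - real k / 10) * real (nUnsat k m \<Phi> \<sigma>))"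
      by (simp add: exp_add[symmetric])
    then show "1 \<le> exp (- \<theta> * A / 10) * (\<Prod>i<m. g (cl k \<Phi> i))" by (simp add: eq)
  qed (auto simp: gexp)
  also have "(\<Sum>c\<in>clauses k n. g c) \<le> real (2*n)^k * exp (- 1 / (2 * 2^k))"
  proof -
    have "(\<Sum>c\<in>clauses k n. g c) = real (card (clauses k n)) - (\<Sum>c\<in>clauses k n. uu k \<sigma> c)
        + exp (\<theta> - real k / 10) * (\<Sum>c\<in>clauses k n. uu k \<sigma> c * exp (real (ww W k c)))"
      by (simp add: g_def sum.distrib sum_subtractf sum_distrib_left mult.assoc mult.left_commute)
    also have "\<dots> = real (2*n)^k - real n ^ k + exp (- real k / 20) * (real n + real (card W) * (exp 1 - 1)) ^ k"
      by (simp add: card_clauses sum_clauses_uu sum_clauses_uu_exp[OF W] \<theta>_def)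
    also have "(real n + real (card W) * (exp 1 - 1)) ^ k \<le> (real n * (1 + 200 * kappa k)) ^ k"
    proof (rule power_mono)
      have "exp (1::real) \<le> 3" using exp_le by simp
      then have "real (card W) * (exp 1 - 1) \<le> (100 * kappa k * real n) * 2"
        using cW by (intro mult_mono) auto
      then show "real n + real (card W) * (exp 1 - 1) \<le> real n * (1 + 200 * kappa k)"
        by (simp add: algebra_simps)
      show "0 \<le> real n + real (card W) * (exp 1 - 1)" by (simp add: exp_ge_zero)
    qed
    also have "\<dots> = real n ^ k * (1 + 200 * kappa k) ^ k" by (simp add: power_mult_distrib)
    also have "(1 + 200 * kappa k) ^ k \<le> exp (200 * kappa k) ^ k"
      by (rule power_mono) (use exp_ge_add_one_self[of "200 * kappa k"] k in \<open>auto simp: kappa_def\<close>)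
    also have "exp (200 * kappa k) ^ k = real k ^ 200"
    proof -
      have "exp (200 * kappa k) ^ k = exp (real k * (200 * kappa k))" by (rule exp_of_nat_mult[symmetric])
      also have "real k * (200 * kappa k) = real 200 * ln (real k)" using k by (simp add: kappa_def)
      also have "exp (real 200 * ln (real k)) = exp (ln (real k)) ^ 200" by (rule exp_of_nat_mult)
      also have "\<dots> = real k ^ 200" using k by simp
      finally show ?thesis .
    qed
    finally have 1: "(\<Sum>c\<in>clauses k n. g c) \<le> real (2*n)^k - real n ^ k + exp (- real k / 20) * (real n ^ k * real k ^ 200)"
      by (simp add: mult_left_mono)
    have "exp (- real k / 20) * (real n ^ k * real k ^ 200) = real n ^ k * (exp (- real k / 20) * real k ^ 200)"
      by simp
    also have "\<dots> \<le> real n ^ k * (1/2)" using cond by (intro mult_left_mono) auto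
    finally have 2: "(\<Sum>c\<in>clauses k n. g c) \<le> real (2*n)^k - real n ^ k / 2" using 1 by simp
    have nk: "real n ^ k = real (2*n)^k / 2^k" by (simp add: power_mult_distrib)
    have "real (2*n)^k - real n ^ k / 2 = real (2*n)^k * (1 - 1 / (2 * 2^k))"
      unfolding nk by (simp add: field_simps)
    also have "\<dots> \<le> real (2*n)^k * exp (- 1 / (2 * 2^k))"
      using exp_ge_add_one_self[of "- 1 / (2 * 2^k)"] by (intro mult_left_mono) auto
    finally show ?thesis using 2 by linarith
  qed
  then have "exp (- \<theta> * A / 10) * (\<Sum>c\<in>clauses k n. g c)^m \<le> exp (- \<theta> * A / 10) * (real (2*n)^k * exp (- 1 / (2 * 2^k)))^m"
    by (intro mult_left_mono power_mono) (auto simp: gexp intro: sum_nonneg)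
  also have "\<dots> = real (2*n)^(k*m) * (exp (- \<theta> * A / 10) * exp (- 1 / (2 * 2^k)) ^ m)"
    by (simp add: power_mult_distrib power_mult)
  also have "exp (- \<theta> * A / 10) * exp (- 1 / (2 * 2^k)) ^ m \<le> exp (- \<theta> * A / 10)"
    by (simp add: exp_of_nat_mult[symmetric])
  also have "- \<theta> * A / 10 = - real k * A / 200" by (simp add: \<theta>_def)
  finally show ?thesis by (simp add: A_def mult_left_mono)
qed



lemma sum_pow_card:
  fixes x :: real
  assumes "finite A"
  shows "(\<Sum>W\<in>Pow A. x ^ card W) = (1 + x) ^ card A"
  using assms
proof (induction A rule: finite_induct)
  case empty then show ?case by simp
next
  case (insert a A)
  have disj: "Pow A \<inter> insert a ` Pow A = {}" using insert by auto
  have inj: "inj_on (insert a) (Pow A)" using insert by (auto simp: inj_on_def)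
  have "(\<Sum>W\<in>Pow (insert a A). x ^ card W) = (\<Sum>W\<in>Pow A. x ^ card W) + (\<Sum>W\<in>insert a ` Pow A. x ^ card W)"
    using insert by (simp add: Pow_insert sum.union_disjoint disj)
  also have "(\<Sum>W\<in>insert a ` Pow A. x ^ card W) = (\<Sum>W\<in>Pow A. x ^ card (insert a W))"
    by (rule sum.reindex[OF inj, unfolded comp_def])
  also have "\<dots> = (\<Sum>W\<in>Pow A. x * x ^ card W)"
  proof (intro sum.cong refl)
    fix W assume "W \<in> Pow A"
    then have "finite W" "a \<notin> W" using insert finite_subset by auto
    then show "x ^ card (insert a W) = x * x ^ card W" by simp
  qed
  finally show ?case using insert by (simp add: sum_distrib_left[symmetric] algebra_simps)
qed

lemma vol_subsets:
  fixes x R :: real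
  assumes x: "0 < x" "x \<le> 1"
  shows "real (card {W\<in>Pow {..<n}. real (card W) \<le> R}) \<le> exp (- R * ln x + x * real n)"
proof -
  have "real (card {W\<in>Pow {..<n}. real (card W) \<le> R}) = (\<Sum>W\<in>Pow {..<n}. if real (card W) \<le> R then 1 else 0)"
    by (rule card_filter_sum) auto
  also have "\<dots> \<le> (\<Sum>W\<in>Pow {..<n}. x ^ card W * exp (- R * ln x))"
  proof (rule sum_mono)
    fix W :: "nat set"
    have xp: "x ^ card W = exp (real (card W) * ln x)"
      using x by (simp add: exp_of_nat_mult)
    show "(if real (card W) \<le> R then 1 else 0) \<le> x ^ card W * exp (- R * ln x)"
    proof (cases "real (card W) \<le> R")
      case True
      have "ln x \<le> 0" using x by simp
      then have "0 \<le> (real (card W) - R) * ln x" using True by (intro mult_nonpos_nonpos) auto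
      then have "1 \<le> exp (real (card W) * ln x + - R * ln x)" by (simp add: algebra_simps)
      then show ?thesis using True by (simp add: xp mult_exp_exp)
    next
      case False then show ?thesis using x by simp
    qed
  qed
  also have "\<dots> = exp (- R * ln x) * (1 + x) ^ n"
    by (simp add: sum_distrib_right[symmetric] sum_pow_card mult.commute)
  also have "\<dots> \<le> exp (- R * ln x) * exp x ^ n"
    using x by (intro mult_left_mono power_mono) (auto simp: exp_ge_add_one_self add.commute)
  also have "\<dots> = exp (- R * ln x + x * real n)"
    by (simp add: mult_exp_exp exp_of_nat_mult[symmetric] mult.commute)
  finally show ?thesis .
qed

lemma hdist_card_Delta: "card (Delta n \<sigma> \<tau>) = hdist n \<sigma> \<tau>"
  by (simp add: Delta_def hdist_def)

lemma hdist_sym: "hdist n \<sigma> \<tau> = hdist n \<tau> \<sigma>"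
  unfolding hdist_def by (rule arg_cong[where f=card]) auto

lemma Delta_inj:
  assumes "\<sigma> \<in> assignments n" "\<tau> \<in> assignments n" "\<tau>' \<in> assignments n"
    and "Delta n \<sigma> \<tau> = Delta n \<sigma> \<tau>'"
  shows "\<tau> = \<tau>'"
proof
  fix v
  show "\<tau> v = \<tau>' v"
  proof (cases "v < n")
    case True
    have "(v \<in> Delta n \<sigma> \<tau>) = (v \<in> Delta n \<sigma> \<tau>')" using assms(4) by simp
    then show ?thesis using True by (auto simp: Delta_def)
  next
    case False
    then show ?thesis using assms(2,3) by (auto simp: assignments_def PiE_def extensional_def)
  qed
qed

lemma Dball_card:
  assumes "\<sigma> \<in> assignments n"
  shows "card (Dball k n \<sigma> 0 r) \<le> card {W\<in>Pow {..<n}. real (card W) \<le> r * kappa k * real n}"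
proof (rule card_inj_on_le[where f = "Delta n \<sigma>"])
  show "inj_on (Delta n \<sigma>) (Dball k n \<sigma> 0 r)"
    using Delta_inj[OF assms] by (auto simp: inj_on_def Dball_def)
  show "Delta n \<sigma> ` Dball k n \<sigma> 0 r \<subseteq> {W\<in>Pow {..<n}. real (card W) \<le> r * kappa k * real n}"
  proof
    fix W assume "W \<in> Delta n \<sigma> ` Dball k n \<sigma> 0 r"
    then obtain \<tau> where \<tau>: "\<tau> \<in> Dball k n \<sigma> 0 r" "W = Delta n \<sigma> \<tau>" by auto
    then have "int (hdist n \<sigma> \<tau>) \<le> \<lfloor>r * kappa k * real n\<rfloor>" by (simp add: Dball_def)
    then have "real_of_int (int (hdist n \<sigma> \<tau>)) \<le> r * kappa k * real n"
      by (simp only: le_floor_iff)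
    then have "real (hdist n \<sigma> \<tau>) \<le> r * kappa k * real n" by simp
    moreover have "W \<subseteq> {..<n}" using \<tau> by (auto simp: Delta_def)
    ultimately show "W \<in> {W\<in>Pow {..<n}. real (card W) \<le> r * kappa k * real n}"
      using \<tau>(2) hdist_card_Delta[of n \<sigma> \<tau>] by auto
  qed
  show "finite {W\<in>Pow {..<n}. real (card W) \<le> r * kappa k * real n}" by simp
qed

lemma Dball_vol:
  assumes "\<sigma> \<in> assignments n" and x: "0 < c * kappa k" "c * kappa k \<le> 1"
  shows "real (card (Dball k n \<sigma> 0 c)) \<le> exp (real n * (c * kappa k * (1 - ln (c * kappa k))))"
proof -
  have "real (card (Dball k n \<sigma> 0 c)) \<le> real (card {W\<in>Pow {..<n}. real (card W) \<le> c * kappa k * real n})"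
    using Dball_card[OF assms(1)] by simp
  also have "\<dots> \<le> exp (- (c * kappa k * real n) * ln (c * kappa k) + c * kappa k * real n)"
    by (rule vol_subsets[OF x])
  also have "\<dots> = exp (real n * (c * kappa k * (1 - ln (c * kappa k))))"
    by (simp add: algebra_simps)
  finally show ?thesis .
qed



definition sep :: "nat \<Rightarrow> nat \<Rightarrow> assignment set \<Rightarrow> bool" where
  "sep k n S \<longleftrightarrow> (\<forall>\<mu>\<in>S. \<forall>\<nu>\<in>S. \<mu> \<noteq> \<nu> \<longrightarrow> real (hdist n \<mu> \<nu>) \<ge> 2 * kappa k * real n)"

lemma finite_Tset[simp]: "finite (Tset k n m \<Phi>)"
  by (rule finite_subset[of _ "assignments n"]) (auto simp: Tset_def)

lemma mist_exists:
  assumes kap: "0 \<le> kappa k"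
  shows "\<exists>M. is_mist k n m \<Phi> M"
proof -
  define T where "T = Tset k n m \<Phi>"
  define F where "F = {M. M \<subseteq> T \<and> sep k n M}"
  have fF: "finite F" unfolding F_def by (rule finite_subset[of _ "Pow T"]) (auto simp: T_def)
  have "{} \<in> F" by (simp add: F_def sep_def)
  then have ne: "card ` F \<noteq> {}" by auto
  obtain M where M: "M \<in> F" "card M = Max (card ` F)"
    using Max_in[OF finite_imageI[OF fF] ne] by auto
  have fM: "finite M" using M(1) finite_subset[of M T] by (auto simp: F_def T_def)
  have cover: "\<exists>\<mu>\<in>M. real (hdist n \<mu> \<sigma>) \<le> 2 * kappa k * real n" if \<sigma>: "\<sigma> \<in> T" for \<sigma>
  proof (rule ccontr)
    assume nc: "\<not> ?thesis"
    have "\<sigma> \<notin> M"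
    proof
      assume "\<sigma> \<in> M"
      moreover have "hdist n \<sigma> \<sigma> = 0" by (simp add: hdist_def)
      ultimately show False using nc kap by auto
    qed
    have sI: "sep k n (insert \<sigma> M)" unfolding sep_def
    proof (intro ballI impI)
      fix \<mu> \<nu> assume \<mu>: "\<mu> \<in> insert \<sigma> M" and \<nu>: "\<nu> \<in> insert \<sigma> M" and ne: "\<mu> \<noteq> \<nu>"
      have sM: "sep k n M" using M(1) by (simp add: F_def)
      show "2 * kappa k * real n \<le> real (hdist n \<mu> \<nu>)"
      proof (cases "\<mu> = \<sigma>")
        case True
        then have "\<nu> \<in> M" using \<nu> ne by auto
        then have "\<not> real (hdist n \<nu> \<sigma>) \<le> 2 * kappa k * real n" using nc by blast
        then show ?thesis using True hdist_sym[of n \<sigma> \<nu>] by simp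
      next
        case False
        then have \<mu>M: "\<mu> \<in> M" using \<mu> by auto
        show ?thesis
        proof (cases "\<nu> = \<sigma>")
          case True
          then show ?thesis using nc \<mu>M by (simp add: not_le less_imp_le)
        next
          case False
          then have "\<nu> \<in> M" using \<nu> by auto
          then show ?thesis using sM \<mu>M ne unfolding sep_def by blast
        qed
      qed
    qed
    have "insert \<sigma> M \<subseteq> T" using M(1) \<sigma> by (auto simp: F_def)
    then have "insert \<sigma> M \<in> F" using sI by (simp add: F_def)
    then have "card (insert \<sigma> M) \<le> Max (card ` F)" using fF by auto
    then show False using M(2) \<open>\<sigma> \<notin> M\<close> fM by simp
  qed
  have MT: "M \<subseteq> T" and sM: "sep k n M" using M(1) by (auto simp: F_def)
  have "is_mist k n m \<Phi> M" unfolding is_mist_def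
  proof (intro conjI)
    show "M \<subseteq> Tset k n m \<Phi>" using MT by (simp add: T_def)
    show "\<forall>\<mu>\<in>M. \<forall>\<nu>\<in>M. \<mu> \<noteq> \<nu> \<longrightarrow> 2 * kappa k * real n \<le> real (hdist n \<mu> \<nu>)"
      using sM by (simp add: sep_def)
    show "\<forall>\<sigma>\<in>Tset k n m \<Phi>. \<exists>\<mu>\<in>M. real (hdist n \<mu> \<sigma>) \<le> 2 * kappa k * real n"
      using cover by (simp add: T_def)
  qed
  then show ?thesis by blast
qed

lemma Dball_hdist:
  assumes "\<tau> \<in> Dball k n \<sigma> 0 r"
  shows "real (hdist n \<sigma> \<tau>) \<le> r * kappa k * real n" "\<tau> \<in> assignments n"
proof -
  have "int (hdist n \<sigma> \<tau>) \<le> \<lfloor>r * kappa k * real n\<rfloor>" using assms unfolding Dball_def by blast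
  then have "real_of_int (int (hdist n \<sigma> \<tau>)) \<le> r * kappa k * real n"
    by (simp only: le_floor_iff)
  then show "real (hdist n \<sigma> \<tau>) \<le> r * kappa k * real n" by simp
  show "\<tau> \<in> assignments n" using assms unfolding Dball_def by blast
qed

definition B1 :: "nat \<Rightarrow> nat \<Rightarrow> nat \<Rightarrow> formula set" where
  "B1 k n m = {\<Phi>\<in>formulas k n m. 2^n * exp (- (real m / 2^k) / 10) < real (card (Tset k n m \<Phi>))}"

definition SS :: "nat \<Rightarrow> nat \<Rightarrow> assignment \<Rightarrow> assignment set set" where
  "SS k n \<tau> = {S. S \<subseteq> Dball k n \<tau> 0 10 \<and> card S = k + 1 \<and> sep k n S}"

definition B2 :: "nat \<Rightarrow> nat \<Rightarrow> nat \<Rightarrow> formula set" where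
  "B2 k n m = (\<Union>\<tau>\<in>assignments n. \<Union>S\<in>SS k n \<tau>. {\<Phi>\<in>formulas k n m. S \<subseteq> Tset k n m \<Phi>})"

definition WW :: "nat \<Rightarrow> nat \<Rightarrow> nat set set" where
  "WW k n = {W\<in>Pow {..<n}. real (card W) \<le> 100 * kappa k * real n}"

definition E3 :: "nat \<Rightarrow> nat \<Rightarrow> nat \<Rightarrow> assignment \<Rightarrow> nat set \<Rightarrow> formula set" where
  "E3 k n m \<sigma> W = {\<Phi>\<in>formulas k n m. real m / 2^k / 10 < real (nUnsat k m \<Phi> \<sigma>) \<and>
             real k * real (nUnsat k m \<Phi> \<sigma>) / 10 < real (Xcount k m \<Phi> W \<sigma>)}"

definition B3 :: "nat \<Rightarrow> nat \<Rightarrow> nat \<Rightarrow> formula set" where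
  "B3 k n m = (\<Union>\<sigma>\<in>assignments n. \<Union>W\<in>WW k n. E3 k n m \<sigma> W)"

lemma good_quasirandom:
  assumes n: "n > 0" and kap: "0 \<le> kappa k"
    and \<Phi>: "\<Phi> \<in> formulas k n m" "\<Phi> \<notin> B1 k n m" "\<Phi> \<notin> B2 k n m" "\<Phi> \<notin> B3 k n m"
    and V: "\<And>\<sigma>. \<sigma> \<in> assignments n \<Longrightarrow> real (card (Dball k n \<sigma> 0 10)) \<le> V"
    and cond: "2^n * exp (- (real m / 2^k) / 10) * V \<le> 2 ^ n * exp (- 2 * real n / (real k)\<^sup>2)"
  shows "quasirandom k n m \<Phi>"
proof -
  obtain M where M: "is_mist k n m \<Phi> M" using mist_exists[OF kap] by blast
  have MT: "M \<subseteq> Tset k n m \<Phi>" using M by (simp add: is_mist_def)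
  have fM: "finite M" using finite_subset[OF MT finite_Tset] .
  have sepM: "sep k n M" using M by (simp add: is_mist_def sep_def)
  have MA: "M \<subseteq> assignments n" using MT by (auto simp: Tset_def)
  have V0: "0 \<le> V" using V[of "\<lambda>v\<in>{..<n}. True"] by (auto simp: assignments_def)
  have Q1: "real (card (Dmist k n M)) \<le> 2 ^ n * exp (- 2 * real n / (real k)\<^sup>2)"
  proof -
    have "real (card (Dmist k n M)) \<le> real (\<Sum>\<sigma>\<in>M. card (Dball k n \<sigma> 0 10))"
      unfolding Dmist_def using card_UN_le[OF fM] by (simp only: of_nat_le_iff)
    also have "\<dots> = (\<Sum>\<sigma>\<in>M. real (card (Dball k n \<sigma> 0 10)))" by simp
    also have "\<dots> \<le> (\<Sum>\<sigma>\<in>M. V)" by (rule sum_mono) (use V MA in auto)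
    also have "\<dots> = real (card M) * V" by simp
    also have "\<dots> \<le> real (card (Tset k n m \<Phi>)) * V"
      using card_mono[OF finite_Tset MT] V0 by (intro mult_right_mono) auto
    also have "\<dots> \<le> 2^n * exp (- (real m / 2^k) / 10) * V"
      using \<Phi>(1,2) V0 by (intro mult_right_mono) (auto simp: B1_def not_less)
    finally show ?thesis using cond by linarith
  qed
  have Q2: "card (M \<inter> Dball k n \<tau> 0 10) \<le> k" if \<tau>: "\<tau> \<in> assignments n" for \<tau>
  proof (rule ccontr)
    assume "\<not> ?thesis"
    then have "k + 1 \<le> card (M \<inter> Dball k n \<tau> 0 10)" by simp
    then obtain S where S: "S \<subseteq> M \<inter> Dball k n \<tau> 0 10" "card S = k + 1"
      by (rule obtain_subset_with_card_n)
    have "sep k n S" using sepM S(1) unfolding sep_def by blast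
    then have "S \<in> SS k n \<tau>" using S by (auto simp: SS_def)
    moreover have "S \<subseteq> Tset k n m \<Phi>" using S MT by auto
    ultimately have "\<Phi> \<in> B2 k n m" using \<tau> \<Phi>(1) unfolding B2_def by blast
    then show False using \<Phi>(3) by simp
  qed
  have Q3: "real (Xcount k m \<Phi> (Delta n \<mu> \<sigma>) \<sigma>) \<le> real k * real (nUnsat k m \<Phi> \<sigma>) / 10"
    if \<mu>: "\<mu> \<in> M" and \<sigma>: "\<sigma> \<in> Dball k n \<mu> 0 100 - Tset k n m \<Phi>" for \<mu> \<sigma>
  proof (rule ccontr)
    assume bad: "\<not> ?thesis"
    have sA: "\<sigma> \<in> assignments n" using \<sigma> Dball_hdist(2) by auto
    have "\<not> real (nUnsat k m \<Phi> \<sigma>) \<le> real n * rho k n m / 10"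
      using \<sigma> sA by (auto simp: Tset_def)
    then have U: "real m / 2^k / 10 < real (nUnsat k m \<Phi> \<sigma>)" using n by (simp add: rho_eq)
    have "real (card (Delta n \<mu> \<sigma>)) \<le> 100 * kappa k * real n"
      using Dball_hdist(1)[of \<sigma> k n \<mu> 100] \<sigma> by (simp add: hdist_card_Delta)
    then have "Delta n \<mu> \<sigma> \<in> WW k n" by (auto simp: WW_def Delta_def)
    moreover have "\<Phi> \<in> E3 k n m \<sigma> (Delta n \<mu> \<sigma>)" using \<Phi>(1) U bad by (auto simp: E3_def)
    ultimately have "\<Phi> \<in> B3 k n m" using sA unfolding B3_def by blast
    then show False using \<Phi>(4) by simp
  qed
  show ?thesis unfolding quasirandom_def
  proof (intro exI[of _ M] conjI ballI)
    show "is_mist k n m \<Phi> M" by (rule M)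
    show "real (card (Dmist k n M)) \<le> 2 ^ n * exp (- 2 * real n / (real k)\<^sup>2)" by (rule Q1)
  next
    fix \<tau> assume "\<tau> \<in> assignments n" then show "card (M \<inter> Dball k n \<tau> 0 10) \<le> k" by (rule Q2)
  next
    fix \<mu> \<sigma> assume "\<mu> \<in> M" "\<sigma> \<in> Dball k n \<mu> 0 100 - Tset k n m \<Phi>"
    then show "real (Xcount k m \<Phi> (Delta n \<mu> \<sigma>) \<sigma>) \<le> real k * real (nUnsat k m \<Phi> \<sigma>) / 10" by (rule Q3)
  qed
qed



lemma finite_B: "finite (B1 k n m)" "finite (B2 k n m)" "finite (B3 k n m)"
  by (rule finite_subset[OF _ finite_formulas[of k n m]]; auto simp: B1_def B2_def B3_def E3_def)+

lemma choose_le_pow_real: "real (d choose r) \<le> real d ^ r"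
proof (cases "r \<le> d")
  case True then show ?thesis using binomial_le_pow[OF True] by (metis of_nat_le_iff of_nat_power)
next
  case False
  then have "d < r" by simp
  then have "d choose r = 0" by (rule binomial_eq_0)
  then show ?thesis by (metis of_nat_0 of_nat_0_le_iff of_nat_power)
qed

lemma real_card_UN_le:
  assumes "finite I"
  shows "real (card (\<Union>i\<in>I. A i)) \<le> (\<Sum>i\<in>I. real (card (A i)))"
proof -
  have "card (\<Union>i\<in>I. A i) \<le> (\<Sum>i\<in>I. card (A i))" by (rule card_UN_le[OF assms])
  then have "real (card (\<Union>i\<in>I. A i)) \<le> real (\<Sum>i\<in>I. card (A i))" by (rule of_nat_mono)
  then show ?thesis by simp
qed

lemma B1_bound:
  assumes n: "n > 0" and k: "k \<ge> 1" and kap: "2 * kappa k \<le> 1"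
  shows "real (card (B1 k n m)) \<le> real (2*n)^(k*m) * exp (- (real m / 2^k) / 10)"
proof -
  define A where "A = real m / 2^k"
  define c where "c = 2^n * exp (- A / 10)"
  have c0: "0 < c" by (simp add: c_def)
  have single: "real (card {\<Phi>\<in>formulas k n m. \<sigma> \<in> Tset k n m \<Phi>}) \<le> real (2*n)^(k*m) * exp (- A / 5)"
    if "\<sigma> \<in> assignments n" for \<sigma>
  proof -
    have "real (card {\<Phi>\<in>formulas k n m. {\<sigma>} \<subseteq> Tset k n m \<Phi>}) \<le> real (2*n)^(k*m) * exp (- real (card {\<sigma>}) * (real m / 2^k) / 5)"
      by (rule eventT[OF n k kap]) (use that in auto)
    then show ?thesis by (simp add: A_def)
  qed
  have "real (card (B1 k n m)) * c = (\<Sum>\<Phi>\<in>B1 k n m. c)" by simp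
  also have "\<dots> \<le> (\<Sum>\<Phi>\<in>B1 k n m. real (card (Tset k n m \<Phi>)))"
    by (rule sum_mono) (auto simp: B1_def c_def A_def)
  also have "\<dots> \<le> (\<Sum>\<Phi>\<in>formulas k n m. real (card (Tset k n m \<Phi>)))"
    by (rule sum_mono2) (auto simp: B1_def)
  also have "\<dots> = (\<Sum>\<Phi>\<in>formulas k n m. \<Sum>\<sigma>\<in>assignments n. if \<sigma> \<in> Tset k n m \<Phi> then 1 else 0)"
  proof (rule sum.cong[OF refl])
    fix \<Phi>
    have "Tset k n m \<Phi> = {\<sigma>\<in>assignments n. \<sigma> \<in> Tset k n m \<Phi>}" by (auto simp: Tset_def)
    then show "real (card (Tset k n m \<Phi>)) = (\<Sum>\<sigma>\<in>assignments n. if \<sigma> \<in> Tset k n m \<Phi> then 1 else 0)"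
      by (metis card_filter_sum finite_assignments)
  qed
  also have "\<dots> = (\<Sum>\<sigma>\<in>assignments n. \<Sum>\<Phi>\<in>formulas k n m. if \<sigma> \<in> Tset k n m \<Phi> then 1 else 0)"
    by (rule sum.swap)
  also have "\<dots> = (\<Sum>\<sigma>\<in>assignments n. real (card {\<Phi>\<in>formulas k n m. \<sigma> \<in> Tset k n m \<Phi>}))"
    by (intro sum.cong refl) (simp add: card_filter_sum)
  also have "\<dots> \<le> (\<Sum>\<sigma>\<in>assignments n. real (2*n)^(k*m) * exp (- A / 5))"
    by (rule sum_mono) (rule single)
  also have "\<dots> = 2^n * (real (2*n)^(k*m) * exp (- A / 5))"
    by (simp add: card_assignments)
  also have "\<dots> = (real (2*n)^(k*m) * exp (- A / 10)) * c"
  proof -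
    have "exp (- A / 5) = exp (- A / 10) * exp (- A / 10)" by (simp add: mult_exp_exp)
    then show ?thesis by (simp add: c_def algebra_simps)
  qed
  finally show ?thesis using c0 by (simp add: A_def)
qed

lemma B2_bound:
  assumes n: "n > 0" and k: "k \<ge> 1" and kap: "2 * kappa k \<le> 1"
    and V: "\<And>\<sigma>. \<sigma> \<in> assignments n \<Longrightarrow> real (card (Dball k n \<sigma> 0 10)) \<le> V"
  shows "real (card (B2 k n m)) \<le> 2^n * V^(k+1) * (real (2*n)^(k*m) * exp (- real (k+1) * (real m / 2^k) / 5))"
proof -
  define Q where "Q = real (2*n)^(k*m) * exp (- real (k+1) * (real m / 2^k) / 5)"
  have Q0: "0 \<le> Q" by (simp add: Q_def)
  have fSS: "finite (SS k n \<tau>)" if "\<tau> \<in> assignments n" for \<tau>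
  proof (rule finite_subset[of _ "Pow (Dball k n \<tau> 0 10)"])
    show "SS k n \<tau> \<subseteq> Pow (Dball k n \<tau> 0 10)" by (auto simp: SS_def)
    show "finite (Pow (Dball k n \<tau> 0 10))"
      by (rule finite_Pow_iff[THEN iffD2], rule finite_subset[of _ "assignments n"]) (auto simp: Dball_def)
  qed
  have inner: "real (card (\<Union>S\<in>SS k n \<tau>. {\<Phi>\<in>formulas k n m. S \<subseteq> Tset k n m \<Phi>})) \<le> V^(k+1) * Q"
    if \<tau>: "\<tau> \<in> assignments n" for \<tau>
  proof -
    have fD: "finite (Dball k n \<tau> 0 10)" by (rule finite_subset[of _ "assignments n"]) (auto simp: Dball_def)
    have "real (card (\<Union>S\<in>SS k n \<tau>. {\<Phi>\<in>formulas k n m. S \<subseteq> Tset k n m \<Phi>}))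
        \<le> (\<Sum>S\<in>SS k n \<tau>. real (card {\<Phi>\<in>formulas k n m. S \<subseteq> Tset k n m \<Phi>}))"
      by (rule real_card_UN_le[OF fSS[OF \<tau>]])
    also have "\<dots> \<le> (\<Sum>S\<in>SS k n \<tau>. Q)"
    proof (rule sum_mono)
      fix S assume S: "S \<in> SS k n \<tau>"
      then have cS: "card S = k + 1" and sS: "sep k n S" and SD: "S \<subseteq> Dball k n \<tau> 0 10" by (auto simp: SS_def)
      have fS: "finite S" using cS by (intro card_ge_0_finite) simp
      have SA: "S \<subseteq> assignments n" using SD by (auto simp: Dball_def)
      have "real (card {\<Phi>\<in>formulas k n m. S \<subseteq> Tset k n m \<Phi>})
          \<le> real (2*n)^(k*m) * exp (- real (card S) * (real m / 2^k) / 5)"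
        by (rule eventT[OF n k kap fS SA]) (use cS sS in \<open>auto simp: sep_def\<close>)
      then show "real (card {\<Phi>\<in>formulas k n m. S \<subseteq> Tset k n m \<Phi>}) \<le> Q"
        using cS by (simp add: Q_def)
    qed
    also have "\<dots> = real (card (SS k n \<tau>)) * Q" by simp
    also have "\<dots> \<le> V^(k+1) * Q"
    proof (rule mult_right_mono[OF _ Q0])
      have "card (SS k n \<tau>) \<le> card {S. S \<subseteq> Dball k n \<tau> 0 10 \<and> card S = k + 1}"
      proof (rule card_mono)
        show "finite {S. S \<subseteq> Dball k n \<tau> 0 10 \<and> card S = k + 1}"
          by (rule finite_subset[of _ "Pow (Dball k n \<tau> 0 10)"]) (use fD in auto)
        show "SS k n \<tau> \<subseteq> {S. S \<subseteq> Dball k n \<tau> 0 10 \<and> card S = k + 1}"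
          by (auto simp: SS_def)
      qed
      also have "\<dots> = card (Dball k n \<tau> 0 10) choose (k+1)" by (rule n_subsets[OF fD])
      finally have "real (card (SS k n \<tau>)) \<le> real (card (Dball k n \<tau> 0 10) choose (k+1))" by simp
      also have "\<dots> \<le> real (card (Dball k n \<tau> 0 10)) ^ (k+1)" by (rule choose_le_pow_real)
      also have "\<dots> \<le> V ^ (k+1)" by (rule power_mono[OF V[OF \<tau>]]) simp
      finally show "real (card (SS k n \<tau>)) \<le> V^(k+1)" .
    qed
    finally show ?thesis .
  qed
  have "real (card (B2 k n m)) \<le> (\<Sum>\<tau>\<in>assignments n. real (card (\<Union>S\<in>SS k n \<tau>. {\<Phi>\<in>formulas k n m. S \<subseteq> Tset k n m \<Phi>})))"
    unfolding B2_def by (rule real_card_UN_le[OF finite_assignments])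
  also have "\<dots> \<le> (\<Sum>\<tau>\<in>assignments n. V^(k+1) * Q)" by (rule sum_mono) (rule inner)
  also have "\<dots> = 2^n * V^(k+1) * Q" by (simp add: card_assignments)
  finally show ?thesis by (simp add: Q_def)
qed

lemma B3_bound:
  assumes n: "n > 0" and k: "k \<ge> 1"
    and cond: "exp (- real k / 20) * real k ^ 200 \<le> 1/2"
  shows "real (card (B3 k n m)) \<le> 2^n * real (card (WW k n)) * (real (2*n)^(k*m) * exp (- real k * (real m / 2^k) / 200))"
proof -
  define Q where "Q = real (2*n)^(k*m) * exp (- real k * (real m / 2^k) / 200)"
  have fW: "finite (WW k n)" by (simp add: WW_def)
  have inner: "real (card (\<Union>W\<in>WW k n. E3 k n m \<sigma> W)) \<le> real (card (WW k n)) * Q" for \<sigma>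
  proof -
    have "real (card (\<Union>W\<in>WW k n. E3 k n m \<sigma> W)) \<le> (\<Sum>W\<in>WW k n. real (card (E3 k n m \<sigma> W)))"
      by (rule real_card_UN_le[OF fW])
    also have "\<dots> \<le> (\<Sum>W\<in>WW k n. Q)"
    proof (rule sum_mono)
      fix W assume "W \<in> WW k n"
      then have W: "W \<subseteq> {..<n}" "real (card W) \<le> 100 * kappa k * real n" by (auto simp: WW_def)
      show "real (card (E3 k n m \<sigma> W)) \<le> Q"
        unfolding E3_def Q_def by (rule event3[OF n k W cond])
    qed
    finally show ?thesis by simp
  qed
  have "real (card (B3 k n m)) \<le> (\<Sum>\<sigma>\<in>assignments n. real (card (\<Union>W\<in>WW k n. E3 k n m \<sigma> W)))"
    unfolding B3_def by (rule real_card_UN_le[OF finite_assignments])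
  also have "\<dots> \<le> (\<Sum>\<sigma>\<in>assignments n. real (card (WW k n)) * Q)" by (rule sum_mono) (rule inner)
  also have "\<dots> = 2^n * real (card (WW k n)) * Q" by (simp add: card_assignments)
  finally show ?thesis by (simp add: Q_def)
qed



lemma pow2_exp: "(2::real) ^ n = exp (real n * ln 2)"
  by (simp add: exp_of_nat_mult)

lemma per_n:
  fixes k n m :: nat and \<beta> v10 v100 :: real
  assumes n: "n > 0" and k1: "k \<ge> 1" and kap2: "2 * kappa k \<le> 1" and kap0: "0 \<le> kappa k"
    and x10: "0 < 10 * kappa k" "10 * kappa k \<le> 1"
    and x100: "0 < 100 * kappa k" "100 * kappa k \<le> 1"
    and c3: "exp (- real k / 20) * real k ^ 200 \<le> 1/2"
    and v10: "v10 = 10 * kappa k * (1 - ln (10 * kappa k))"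
    and v100: "v100 = 100 * kappa k * (1 - ln (100 * kappa k))"
    and C1: "v10 + 2 / (real k)\<^sup>2 \<le> \<beta> / 10"
    and C2: "ln 2 + real (k+1) * v10 - real (k+1) * \<beta> / 5 \<le> -1"
    and C3: "ln 2 + v100 - real k * \<beta> / 200 \<le> -1"
    and A: "\<beta> * real n \<le> real m / 2^k"
  shows "1 - (exp (- \<beta> / 10) ^ n + 2 * exp (-1) ^ n) \<le> prob_quasirandom k n m"
proof -
  define A where "A = real m / 2^k"
  define NF where "NF = real (card (formulas k n m))"
  have NF: "NF = real (2*n)^(k*m)" by (simp add: NF_def card_formulas)
  have NF0: "0 < NF" using n by (simp add: NF)
  define V where "V = exp (real n * v10)"
  have V: "real (card (Dball k n \<sigma> 0 10)) \<le> V" if "\<sigma> \<in> assignments n" for \<sigma>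
    using Dball_vol[OF that x10] by (simp add: V_def v10)
  have nn: "0 \<le> real n" by simp
  define B where "B = B1 k n m \<union> B2 k n m \<union> B3 k n m"
  have cond: "2^n * exp (- A / 10) * V \<le> 2 ^ n * exp (- 2 * real n / (real k)\<^sup>2)"
  proof -
    have "- A / 10 + real n * v10 \<le> - 2 * real n / (real k)\<^sup>2"
    proof -
      have "real n * (v10 + 2 / (real k)\<^sup>2) \<le> real n * (\<beta> / 10)" using C1 by (rule mult_left_mono) simp
      then have h: "real n * v10 + real n * (2 / (real k)\<^sup>2) \<le> (\<beta> * real n) / 10"
        by (simp add: algebra_simps)
      have A': "\<beta> * real n \<le> A" using A by (simp add: A_def)
      have "- A / 10 + real n * v10 \<le> - (real n * (2 / (real k)\<^sup>2))" using h A' by linarith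
      then show ?thesis by simp
    qed
    then have "exp (- A / 10) * V \<le> exp (- 2 * real n / (real k)\<^sup>2)"
      by (simp add: V_def mult_exp_exp)
    then show ?thesis by (simp add: mult.assoc)
  qed
  have good: "formulas k n m - B \<subseteq> {\<Phi>\<in>formulas k n m. quasirandom k n m \<Phi>}"
  proof
    fix \<Phi> assume "\<Phi> \<in> formulas k n m - B"
    then have "\<Phi> \<in> formulas k n m" "\<Phi> \<notin> B1 k n m" "\<Phi> \<notin> B2 k n m" "\<Phi> \<notin> B3 k n m"
      by (auto simp: B_def)
    then show "\<Phi> \<in> {\<Phi>\<in>formulas k n m. quasirandom k n m \<Phi>}"
      using good_quasirandom[OF n kap0 _ _ _ _ V] cond by (auto simp: A_def)
  qed
  have fB: "finite B" using finite_B by (simp add: B_def)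
  have cG: "NF - real (card B) \<le> real (card {\<Phi>\<in>formulas k n m. quasirandom k n m \<Phi>})"
  proof -
    have "card (formulas k n m) - card B \<le> card (formulas k n m - B)" by (rule diff_card_le_card_Diff[OF fB])
    also have "\<dots> \<le> card {\<Phi>\<in>formulas k n m. quasirandom k n m \<Phi>}"
      by (rule card_mono[OF _ good]) simp
    finally have "card (formulas k n m) - card B \<le> card {\<Phi>\<in>formulas k n m. quasirandom k n m \<Phi>}" .
    then show ?thesis unfolding NF_def by linarith
  qed
  have b1: "real (card (B1 k n m)) \<le> NF * exp (- \<beta> / 10) ^ n"
  proof -
    have "real (card (B1 k n m)) \<le> NF * exp (- A / 10)"
      using B1_bound[OF n k1 kap2] by (simp add: NF A_def)
    also have "exp (- A / 10) \<le> exp (- \<beta> / 10) ^ n"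
      using A by (simp add: exp_of_nat_mult[symmetric] A_def) (simp add: mult.commute)
    finally show ?thesis using NF0 by (simp add: mult_left_mono)
  qed
  have b2: "real (card (B2 k n m)) \<le> NF * exp (-1) ^ n"
  proof -
    have "real (card (B2 k n m)) \<le> 2^n * V^(k+1) * (NF * exp (- real (k+1) * A / 5))"
      using B2_bound[OF n k1 kap2 V] by (simp add: NF A_def)
    also have "2^n * V^(k+1) * (NF * exp (- real (k+1) * A / 5))
        = NF * exp (real n * ln 2 + real (k+1) * (real n * v10) - real (k+1) * A / 5)"
      by (simp add: pow2_exp V_def exp_of_nat_mult[symmetric] mult_exp_exp exp_diff exp_minus field_simps)
    also have "\<dots> \<le> NF * exp (real n * (-1))"
    proof -
      have "real (k+1) * (\<beta> * real n) \<le> real (k+1) * A" using A by (intro mult_left_mono) (auto simp: A_def)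
      moreover have "real n * (ln 2 + real (k+1) * v10 - real (k+1) * \<beta> / 5) \<le> real n * (-1)"
        using C2 by (rule mult_left_mono) simp
      ultimately have "real n * ln 2 + real (k+1) * (real n * v10) - real (k+1) * A / 5 \<le> real n * (-1)"
        by (simp add: algebra_simps)
      then show ?thesis using NF0 by simp
    qed
    also have "exp (real n * (-1)) = exp (-1) ^ n" by (rule exp_of_nat_mult)
    finally show ?thesis .
  qed
  have b3: "real (card (B3 k n m)) \<le> NF * exp (-1) ^ n"
  proof -
    have cW: "real (card (WW k n)) \<le> exp (real n * v100)"
    proof -
      have "real (card (WW k n)) \<le> exp (- (100 * kappa k * real n) * ln (100 * kappa k) + 100 * kappa k * real n)"
        unfolding WW_def by (rule vol_subsets[OF x100])
      also have "\<dots> = exp (real n * v100)" by (simp add: v100 algebra_simps)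
      finally show ?thesis .
    qed
    have "real (card (B3 k n m)) \<le> 2^n * real (card (WW k n)) * (NF * exp (- real k * A / 200))"
      using B3_bound[OF n k1 c3] by (simp add: NF A_def)
    also have "\<dots> \<le> 2^n * exp (real n * v100) * (NF * exp (- real k * A / 200))"
      using cW NF0 by (intro mult_right_mono mult_left_mono) auto
    also have "\<dots> = NF * exp (real n * ln 2 + real n * v100 - real k * A / 200)"
      by (simp add: pow2_exp mult_exp_exp exp_diff exp_minus field_simps)
    also have "\<dots> \<le> NF * exp (real n * (-1))"
    proof -
      have "real k * (\<beta> * real n) \<le> real k * A" using A by (intro mult_left_mono) (auto simp: A_def)
      moreover have "real n * (ln 2 + v100 - real k * \<beta> / 200) \<le> real n * (-1)"
        using C3 by (rule mult_left_mono) simp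
      ultimately have "real n * ln 2 + real n * v100 - real k * A / 200 \<le> real n * (-1)"
        by (simp add: algebra_simps)
      then show ?thesis using NF0 by simp
    qed
    also have "exp (real n * (-1)) = exp (-1) ^ n" by (rule exp_of_nat_mult)
    finally show ?thesis .
  qed
  have cB: "real (card B) \<le> NF * (exp (- \<beta> / 10) ^ n + 2 * exp (-1) ^ n)"
  proof -
    have "card B \<le> card (B1 k n m) + card (B2 k n m) + card (B3 k n m)"
      unfolding B_def by (metis (no_types) card_Un_le add_le_mono le_trans order_refl)
    then have "real (card B) \<le> real (card (B1 k n m)) + real (card (B2 k n m)) + real (card (B3 k n m))"
      by linarith
    then show ?thesis using b1 b2 b3 by (simp add: algebra_simps)
  qed
  have "prob_quasirandom k n m = real (card {\<Phi>\<in>formulas k n m. quasirandom k n m \<Phi>}) / NF"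
    by (simp add: prob_quasirandom_def NF_def)
  moreover have "(NF - NF * (exp (- \<beta> / 10) ^ n + 2 * exp (-1) ^ n)) / NF = 1 - (exp (- \<beta> / 10) ^ n + 2 * exp (-1) ^ n)"
    using NF0 by (simp add: field_simps)
  moreover have "(NF - NF * (exp (- \<beta> / 10) ^ n + 2 * exp (-1) ^ n)) / NF \<le> real (card {\<Phi>\<in>formulas k n m. quasirandom k n m \<Phi>}) / NF"
    using cG cB NF0 by (intro divide_right_mono) auto
  ultimately show ?thesis by simp
qed



lemma asym_conds:
  "eventually (\<lambda>k::nat.
     1 \<le> k \<and> 2 * (ln (real k) / real k) \<le> 1 \<and> 0 \<le> ln (real k) / real k \<and>
     0 < 10 * (ln (real k) / real k) \<and> 10 * (ln (real k) / real k) \<le> 1 \<and>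
     0 < 100 * (ln (real k) / real k) \<and> 100 * (ln (real k) / real k) \<le> 1 \<and>
     exp (- real k / 20) * real k ^ 200 \<le> 1/2 \<and>
     10 * (ln (real k) / real k) * (1 - ln (10 * (ln (real k) / real k))) + 2 / (real k)\<^sup>2
        \<le> (195 * (ln (real k))\<^sup>2 / real k) / 10 \<and>
     ln 2 + real (k+1) * (10 * (ln (real k) / real k) * (1 - ln (10 * (ln (real k) / real k))))
        - real (k+1) * (195 * (ln (real k))\<^sup>2 / real k) / 5 \<le> -1 \<and>
     ln 2 + 100 * (ln (real k) / real k) * (1 - ln (100 * (ln (real k) / real k)))
        - real k * (195 * (ln (real k))\<^sup>2 / real k) / 200 \<le> -1 \<and>
     0 < 195 * (ln (real k))\<^sup>2 / real k) sequentially"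
proof -
  have e1: "eventually (\<lambda>k::nat. 1 \<le> k) sequentially" by (rule eventually_ge_at_top)
  have e2: "eventually (\<lambda>k::nat. 2 * (ln (real k) / real k) \<le> 1) sequentially" by real_asymp
  have e3: "eventually (\<lambda>k::nat. 0 \<le> ln (real k) / real k) sequentially" by real_asymp
  have e4: "eventually (\<lambda>k::nat. 0 < 10 * (ln (real k) / real k)) sequentially" by real_asymp
  have e5: "eventually (\<lambda>k::nat. 10 * (ln (real k) / real k) \<le> 1) sequentially" by real_asymp
  have e6: "eventually (\<lambda>k::nat. 0 < 100 * (ln (real k) / real k)) sequentially" by real_asymp
  have e7: "eventually (\<lambda>k::nat. 100 * (ln (real k) / real k) \<le> 1) sequentially" by real_asymp
  have e8: "eventually (\<lambda>k::nat. exp (- real k / 20) * real k ^ 200 \<le> 1/2) sequentially" by real_asymp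
  have e9: "eventually (\<lambda>k::nat. 10 * (ln (real k) / real k) * (1 - ln (10 * (ln (real k) / real k))) + 2 / (real k)\<^sup>2
        \<le> (195 * (ln (real k))\<^sup>2 / real k) / 10) sequentially" by real_asymp
  have e10: "eventually (\<lambda>k::nat. ln 2 + real (k+1) * (10 * (ln (real k) / real k) * (1 - ln (10 * (ln (real k) / real k))))
        - real (k+1) * (195 * (ln (real k))\<^sup>2 / real k) / 5 \<le> -1) sequentially" by real_asymp
  have e11: "eventually (\<lambda>k::nat. ln 2 + 100 * (ln (real k) / real k) * (1 - ln (100 * (ln (real k) / real k)))
        - real k * (195 * (ln (real k))\<^sup>2 / real k) / 200 \<le> -1) sequentially" by real_asymp
  have e12: "eventually (\<lambda>k::nat. 0 < 195 * (ln (real k))\<^sup>2 / real k) sequentially" by real_asymp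
  show ?thesis by (intro eventually_conj e1 e2 e3 e4 e5 e6 e7 e8 e9 e10 e11 e12)
qed

lemma main_k:
  fixes k :: nat and m :: "nat \<Rightarrow> nat"
  assumes k1: "1 \<le> k" and kap2: "2 * kappa k \<le> 1" and kap0: "0 \<le> kappa k"
    and x10: "0 < 10 * kappa k" "10 * kappa k \<le> 1"
    and x100: "0 < 100 * kappa k" "100 * kappa k \<le> 1"
    and c3: "exp (- real k / 20) * real k ^ 200 \<le> 1/2"
    and C1: "10 * kappa k * (1 - ln (10 * kappa k)) + 2 / (real k)\<^sup>2 \<le> (195 * (ln (real k))\<^sup>2 / real k) / 10"
    and C2: "ln 2 + real (k+1) * (10 * kappa k * (1 - ln (10 * kappa k))) - real (k+1) * (195 * (ln (real k))\<^sup>2 / real k) / 5 \<le> -1"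
    and C3: "ln 2 + 100 * kappa k * (1 - ln (100 * kappa k)) - real k * (195 * (ln (real k))\<^sup>2 / real k) / 200 \<le> -1"
    and b0: "0 < 195 * (ln (real k))\<^sup>2 / real k"
    and hyp: "\<forall>n>0. real (m n) / real n \<ge> 195 * 2 ^ k * (ln (real k))\<^sup>2 / real k"
  shows "(\<lambda>n. prob_quasirandom k n (m n)) \<longlonglongrightarrow> 1"
proof -
  define \<beta> where "\<beta> = 195 * (ln (real k))\<^sup>2 / real k"
  define L where "L = (\<lambda>n::nat. 1 - (exp (- \<beta> / 10) ^ n + 2 * exp (-1) ^ n))"
  have lower: "eventually (\<lambda>n. L n \<le> prob_quasirandom k n (m n)) sequentially"
    using eventually_gt_at_top[of 0]
  proof (rule eventually_mono)
    fix n :: nat assume n: "0 < n"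
    have h: "195 * 2 ^ k * (ln (real k))\<^sup>2 / real k \<le> real (m n) / real n" using hyp n by blast
    have "2^k * \<beta> = 195 * 2 ^ k * (ln (real k))\<^sup>2 / real k" by (simp add: \<beta>_def)
    then have "real (m n) / real n \<ge> 2^k * \<beta>" using h by linarith
    then have "2^k * \<beta> * real n \<le> real (m n)" using n by (simp add: field_simps)
    then have A: "\<beta> * real n \<le> real (m n) / 2^k" by (simp add: field_simps)
    show "L n \<le> prob_quasirandom k n (m n)"
      unfolding L_def
      by (rule per_n[OF n k1 kap2 kap0 x10 x100 c3 refl refl _ _ _ A])
         (use C1 C2 C3 in \<open>simp_all add: \<beta>_def\<close>)
  qed
  have upper: "eventually (\<lambda>n. prob_quasirandom k n (m n) \<le> 1) sequentially"
  proof (rule always_eventually, rule allI)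
    fix n
    have "card {\<Phi>\<in>formulas k n (m n). quasirandom k n (m n) \<Phi>} \<le> card (formulas k n (m n))"
      by (rule card_mono) auto
    then show "prob_quasirandom k n (m n) \<le> 1"
      unfolding prob_quasirandom_def
      by (cases "card (formulas k n (m n)) = 0") (auto simp: divide_le_eq_1)
  qed
  have "L \<longlonglongrightarrow> 1 - (0 + 2 * 0)"
    unfolding L_def
    using b0 by (intro tendsto_intros LIMSEQ_power_zero) (auto simp: \<beta>_def)
  then have "L \<longlonglongrightarrow> 1" by simp
  then show ?thesis
    using tendsto_sandwich[OF lower upper] tendsto_const by blast
qed

theorem proposition3:
  "\<exists>k0. \<forall>k\<ge>k0. \<forall>m :: nat \<Rightarrow> nat.
     (\<forall>n>0. real (m n) / real n \<ge> 195 * 2 ^ k * (ln (real k))\<^sup>2 / real k) \<longrightarrow>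
     (\<lambda>n. prob_quasirandom k n (m n)) \<longlonglongrightarrow> 1"
proof -
  obtain k0 where k0: "\<And>k. k \<ge> k0 \<Longrightarrow>
     1 \<le> k \<and> 2 * (ln (real k) / real k) \<le> 1 \<and> 0 \<le> ln (real k) / real k \<and>
     0 < 10 * (ln (real k) / real k) \<and> 10 * (ln (real k) / real k) \<le> 1 \<and>
     0 < 100 * (ln (real k) / real k) \<and> 100 * (ln (real k) / real k) \<le> 1 \<and>
     exp (- real k / 20) * real k ^ 200 \<le> 1/2 \<and>
     10 * (ln (real k) / real k) * (1 - ln (10 * (ln (real k) / real k))) + 2 / (real k)\<^sup>2
        \<le> (195 * (ln (real k))\<^sup>2 / real k) / 10 \<and>
     ln 2 + real (k+1) * (10 * (ln (real k) / real k) * (1 - ln (10 * (ln (real k) / real k))))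
        - real (k+1) * (195 * (ln (real k))\<^sup>2 / real k) / 5 \<le> -1 \<and>
     ln 2 + 100 * (ln (real k) / real k) * (1 - ln (100 * (ln (real k) / real k)))
        - real k * (195 * (ln (real k))\<^sup>2 / real k) / 200 \<le> -1 \<and>
     0 < 195 * (ln (real k))\<^sup>2 / real k"
    using asym_conds unfolding eventually_sequentially by blast
  show ?thesis
  proof (intro exI[of _ k0] allI impI)
    fix k m assume k: "k0 \<le> k"
      and hyp: "\<forall>n>0. real (m n) / real n \<ge> 195 * 2 ^ k * (ln (real k))\<^sup>2 / real k"
    note c = k0[OF k, folded kappa_def]
    show "(\<lambda>n. prob_quasirandom k n (m n)) \<longlonglongrightarrow> 1"
      by (rule main_k) (use c hyp in auto)
  qed
qed


end
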